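(* Let $P$ be a probability distribution on $\mathbb{R}^d$ supported in $\{x:\|x\|_2\le C\}$. Let $v_1,\dots,v_m\in\mathbb{R}^d$, $w_1,\dots,w_m>0$, $Z_i:=\mathbb E_{X\sim P}\exp(\langle v_i,X\rangle)$, and $$Q_G:=\sum_{i=1}^m\pi_iP_{v_i},\qquad \pi_i:=\frac{w_iZ_i}{\sum_j w_jZ_j}.$$ Let $\eta\in(0,1)$ and suppose $\widehat Z_i\in[(1-\eta)Z_i,(1+\eta)Z_i]$ for all $i$, and let $\widehat\pi_i:=\frac{w_i\widehat Z_i}{\sum_j w_j\widehat Z_j}$. Suppose further that for every $i$, $\widehat P_{v_i}$ is a probability distribution with $\mathcal W_2(\widehat P_{v_i},P_{v_i})\le\epsilon_{\mathrm{lin}}$ and $\operatorname{supp}(\widehat P_{v_i})\subseteq\{x:\|x\|_2\le C\}$. Let $\widehat Q_G:=\sum_{i=1}^m\widehat\pi_i\widehat P_{v_i}$. Then $$\mathcal W_2(\widehat Q_G,Q_G)\le\epsilon_{\mathrm{lin}}+2C\sqrt{\frac{\eta}{1-\eta}}.$$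
   Context: For $v\in\mathbb{R}^d$, $P_v(dx):=\frac{\exp(\langle v,x\rangle)}{Z_P(v)}P(dx)$ with $Z_P(v)=\mathbb E_{X\sim P}\exp(\langle v,X\rangle)$ is the linear exponential tilt of $P$. $\mathcal W_2$ is the Wasserstein-2 distance with Euclidean cost. *)

theory Defs
  imports "HOL-Probability.Probability"
begin

definition tilt_const :: "'a::euclidean_space measure \<Rightarrow> 'a \<Rightarrow> real" where
  "tilt_const P v = (\<integral>x. exp (v \<bullet> x) \<partial>P)"

definition exp_tilt :: "'a::euclidean_space measure \<Rightarrow> 'a \<Rightarrow> 'a measure" where
  "exp_tilt P v = density P (\<lambda>x. ennreal (exp (v \<bullet> x) / tilt_const P v))"

definition mixture :: "nat \<Rightarrow> (nat \<Rightarrow> real) \<Rightarrow> (nat \<Rightarrow> 'a::euclidean_space measure) \<Rightarrow> 'a measure" where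
  "mixture m p Q = measure_of UNIV (sets borel)
      (\<lambda>A. \<Sum>i<m. ennreal (p i) * emeasure (Q i) A)"

definition couplings :: "'a::euclidean_space measure \<Rightarrow> 'a measure \<Rightarrow> ('a \<times> 'a) measure set" where
  "couplings P Q = {\<mu>. sets \<mu> = sets (borel \<Otimes>\<^sub>M borel) \<and> prob_space \<mu> \<and>
      distr \<mu> borel fst = P \<and> distr \<mu> borel snd = Q}"

text \<open>Wasserstein-2 distance with Euclidean cost (as a real number; finite for the
  boundedly supported measures considered here).\<close>
definition W2 :: "'a::euclidean_space measure \<Rightarrow> 'a measure \<Rightarrow> real" where
  "W2 P Q = sqrt (enn2real (INF \<mu>\<in>couplings P Q.
      \<integral>\<^sup>+ z. ennreal ((norm (fst z - snd z))\<^sup>2) \<partial>\<mu>))"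

end

theory Submission
  imports Defs
begin

definition mix :: "'i set \<Rightarrow> ('i \<Rightarrow> real) \<Rightarrow> ('i \<Rightarrow> 'b::topological_space measure) \<Rightarrow> 'b measure" where
  "mix I p Q = measure_of UNIV (sets borel) (\<lambda>A. \<Sum>i\<in>I. ennreal (p i) * emeasure (Q i) A)"

lemma mixture_mix: "mixture m p Q = mix {..<m} p Q"
  by (simp add: mixture_def mix_def)

lemma sets_mix[simp]: "sets (mix I p Q) = sets borel"
  unfolding mix_def using sets.sigma_sets_eq[of borel] by (simp add: sets_measure_of_conv)

lemma space_mix[simp]: "space (mix I p Q) = UNIV"
  unfolding mix_def by simp

lemma emeasure_mix:
  assumes "finite I" "\<And>i. i \<in> I \<Longrightarrow> sets (Q i) = sets borel" "A \<in> sets borel"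
  shows "emeasure (mix I p Q) A = (\<Sum>i\<in>I. ennreal (p i) * emeasure (Q i) A)"
  unfolding mix_def
proof (rule emeasure_measure_of_sigma)
  show "sigma_algebra UNIV (sets borel)"
    using sets.sigma_algebra_axioms[of borel] by simp
  show "positive (sets borel) (\<lambda>A. \<Sum>i\<in>I. ennreal (p i) * emeasure (Q i) A)"
    by (simp add: positive_def)
  show "countably_additive (sets borel) (\<lambda>A. \<Sum>i\<in>I. ennreal (p i) * emeasure (Q i) A)"
  proof (rule countably_additiveI)
    fix A :: "nat \<Rightarrow> 'b set" assume A: "range A \<subseteq> sets borel" "disjoint_family A"
    have "(\<Sum>n. \<Sum>i\<in>I. ennreal (p i) * emeasure (Q i) (A n)) = (\<Sum>i\<in>I. \<Sum>n. ennreal (p i) * emeasure (Q i) (A n))"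
      by (rule suminf_sum) (rule summableI)
    also have "\<dots> = (\<Sum>i\<in>I. ennreal (p i) * emeasure (Q i) (\<Union>n. A n))"
    proof (rule sum.cong[OF refl])
      fix i assume i: "i \<in> I"
      have "range A \<subseteq> sets (Q i)" using A assms(2)[OF i] by simp
      then show "(\<Sum>n. ennreal (p i) * emeasure (Q i) (A n)) = ennreal (p i) * emeasure (Q i) (\<Union>n. A n)"
        using suminf_emeasure[of A "Q i"] A by simp
    qed
    finally show "(\<Sum>n. \<Sum>i\<in>I. ennreal (p i) * emeasure (Q i) (A n)) = (\<Sum>i\<in>I. ennreal (p i) * emeasure (Q i) (\<Union>n. A n))" .
  qed
qed fact

lemma meas_transfer:
  assumes "g \<in> borel_measurable M" "sets M = sets borel" "sets N = sets borel"
  shows "g \<in> borel_measurable N"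
  using assms(1) unfolding measurable_cong_sets[OF assms(2) refl] measurable_cong_sets[OF assms(3) refl] .

lemma nn_integral_mix:
  assumes I: "finite I" and Q: "\<And>i. i \<in> I \<Longrightarrow> sets (Q i) = sets borel"
    and f: "f \<in> borel_measurable borel"
  shows "(\<integral>\<^sup>+x. f x \<partial>mix I p Q) = (\<Sum>i\<in>I. ennreal (p i) * (\<integral>\<^sup>+x. f x \<partial>Q i))"
proof -
  have fm: "f \<in> borel_measurable (mix I p Q)" unfolding measurable_cong_sets[OF sets_mix refl] by (rule f)
  show ?thesis using fm
  proof (induction rule: borel_measurable_induct)
    case (cong f g)
    have "\<And>i. i \<in> I \<Longrightarrow> (\<integral>\<^sup>+x. f x \<partial>Q i) = (\<integral>\<^sup>+x. g x \<partial>Q i)"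
      using cong(3) by (intro nn_integral_cong) auto
    then show ?case using cong by (simp cong: nn_integral_cong)
  next
    case (set A)
    then show ?case using emeasure_mix[OF I Q] Q by simp
  next
    case (mult u c)
    have um: "u \<in> borel_measurable (Q i)" if "i \<in> I" for i
      using meas_transfer[OF mult(2) sets_mix Q[OF that]] .
    have "(\<integral>\<^sup>+x. c * u x \<partial>mix I p Q) = c * (\<integral>\<^sup>+x. u x \<partial>mix I p Q)"
      by (rule nn_integral_cmult[OF mult(2)])
    also have "\<dots> = c * (\<Sum>i\<in>I. ennreal (p i) * (\<integral>\<^sup>+x. u x \<partial>Q i))"
      using mult(4) by simp
    also have "\<dots> = (\<Sum>i\<in>I. ennreal (p i) * (\<integral>\<^sup>+x. c * u x \<partial>Q i))"
      unfolding sum_distrib_left by (intro sum.cong refl) (simp add: nn_integral_cmult[OF um] mult.left_commute)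
    finally show ?case .
  next
    case (add u v)
    have um: "u \<in> borel_measurable (Q i)" "v \<in> borel_measurable (Q i)" if "i \<in> I" for i
      using meas_transfer[OF \<open>u \<in> borel_measurable (mix I p Q)\<close> sets_mix Q[OF that]]
        meas_transfer[OF \<open>v \<in> borel_measurable (mix I p Q)\<close> sets_mix Q[OF that]] by auto
    have "(\<integral>\<^sup>+x. v x + u x \<partial>mix I p Q) = (\<integral>\<^sup>+x. v x \<partial>mix I p Q) + (\<integral>\<^sup>+x. u x \<partial>mix I p Q)"
      using add by (intro nn_integral_add) auto
    also have "\<dots> = (\<Sum>i\<in>I. ennreal (p i) * (\<integral>\<^sup>+x. v x \<partial>Q i)) + (\<Sum>i\<in>I. ennreal (p i) * (\<integral>\<^sup>+x. u x \<partial>Q i))"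
      using add by simp
    also have "\<dots> = (\<Sum>i\<in>I. ennreal (p i) * (\<integral>\<^sup>+x. v x + u x \<partial>Q i))"
      unfolding sum.distrib[symmetric] by (intro sum.cong refl) (simp add: nn_integral_add[OF um(2) um(1)] distrib_left)
    finally show ?case .
  next
    case (seq U)
    have um: "U n \<in> borel_measurable (Q i)" if "i \<in> I" for i n
      using meas_transfer[OF seq(1)[of n] sets_mix Q[OF that]] .
    have "(\<integral>\<^sup>+x. (SUP n. U n) x \<partial>mix I p Q) = (\<integral>\<^sup>+x. (SUP n. U n x) \<partial>mix I p Q)"
      by (simp add: SUP_apply image_comp)
    also have "\<dots> = (SUP n. \<integral>\<^sup>+x. U n x \<partial>mix I p Q)"
      by (rule nn_integral_monotone_convergence_SUP) (use seq in auto)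
    also have "\<dots> = (SUP n. \<Sum>i\<in>I. ennreal (p i) * (\<integral>\<^sup>+x. U n x \<partial>Q i))"
      using seq by simp
    also have "\<dots> = (\<Sum>i\<in>I. SUP n. ennreal (p i) * (\<integral>\<^sup>+x. U n x \<partial>Q i))"
    proof (rule ennreal_SUP_sum)
      fix i assume "i \<in> I"
      show "incseq (\<lambda>n. ennreal (p i) * (\<integral>\<^sup>+x. U n x \<partial>Q i))"
        using \<open>incseq U\<close> by (auto simp: incseq_def le_fun_def intro!: mult_left_mono nn_integral_mono)
    qed
    also have "\<dots> = (\<Sum>i\<in>I. ennreal (p i) * (\<integral>\<^sup>+x. (SUP n. U n) x \<partial>Q i))"
    proof (rule sum.cong[OF refl])
      fix i assume i: "i \<in> I"
      have "(\<integral>\<^sup>+x. (SUP n. U n) x \<partial>Q i) = (\<integral>\<^sup>+x. (SUP n. U n x) \<partial>Q i)"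
        by (simp add: SUP_apply image_comp)
      also have "\<dots> = (SUP n. \<integral>\<^sup>+x. U n x \<partial>Q i)"
        by (rule nn_integral_monotone_convergence_SUP) (use seq um[OF i] in auto)
      finally have "(\<integral>\<^sup>+x. (SUP n. U n) x \<partial>Q i) = (SUP n. \<integral>\<^sup>+x. U n x \<partial>Q i)" .
      then show "(SUP n. ennreal (p i) * (\<integral>\<^sup>+x. U n x \<partial>Q i)) = ennreal (p i) * (\<integral>\<^sup>+x. (SUP n. U n) x \<partial>Q i)"
        by (simp add: SUP_mult_left_ennreal)
    qed
    finally show ?case .
  qed
qed

lemma prob_space_mix:
  assumes I: "finite I" and Q: "\<And>i. i \<in> I \<Longrightarrow> prob_space (Q i) \<and> sets (Q i) = sets borel"
    and p: "\<And>i. i \<in> I \<Longrightarrow> 0 \<le> p i" and s: "sum p I = 1"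
  shows "prob_space (mix I p Q)"
proof (rule prob_spaceI)
  have "\<And>i. i \<in> I \<Longrightarrow> emeasure (Q i) UNIV = 1"
    using Q prob_space.emeasure_space_1 sets_eq_imp_space_eq[OF conjunct2[OF Q]] by fastforce
  then show "emeasure (mix I p Q) (space (mix I p Q)) = 1"
    using emeasure_mix[OF I, of Q UNIV p] Q p s by simp
qed

lemma distr_mix:
  assumes I: "finite I" and Q: "\<And>i. i \<in> I \<Longrightarrow> sets (Q i) = sets borel"
    and f: "f \<in> borel_measurable borel"
  shows "distr (mix I p Q) borel f = mix I p (\<lambda>i. distr (Q i) borel f)"
proof (rule measure_eqI)
  fix A assume A: "A \<in> sets (distr (mix I p Q) borel f)"
  then have A': "A \<in> sets borel" by simp
  have fm: "f \<in> measurable (mix I p Q) borel" unfolding measurable_cong_sets[OF sets_mix refl] by (rule f)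
  have fq: "f \<in> measurable (Q i) borel" if i: "i \<in> I" for i
    unfolding measurable_cong_sets[OF Q[OF i] refl] by (rule f)
  have sp: "space (Q i) = UNIV" if i: "i \<in> I" for i using sets_eq_imp_space_eq[OF Q[OF i]] by simp
  have pre: "f -` A \<in> sets borel" by (rule measurable_sets_borel[OF f A'])
  have "emeasure (distr (mix I p Q) borel f) A = emeasure (mix I p Q) (f -` A \<inter> space (mix I p Q))"
    by (rule emeasure_distr[OF fm A'])
  also have "\<dots> = (\<Sum>i\<in>I. ennreal (p i) * emeasure (Q i) (f -` A))"
    using emeasure_mix[OF I Q pre] by simp
  also have "\<dots> = (\<Sum>i\<in>I. ennreal (p i) * emeasure (distr (Q i) borel f) A)"
  proof (intro sum.cong refl)
    fix i assume i: "i \<in> I"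
    show "ennreal (p i) * emeasure (Q i) (f -` A) = ennreal (p i) * emeasure (distr (Q i) borel f) A"
      using emeasure_distr[OF fq[OF i] A'] sp[OF i] by simp
  qed
  also have "\<dots> = emeasure (mix I p (\<lambda>i. distr (Q i) borel f)) A"
    by (rule emeasure_mix[symmetric]) (auto simp: I A')
  finally show "emeasure (distr (mix I p Q) borel f) A = emeasure (mix I p (\<lambda>i. distr (Q i) borel f)) A" .
qed simp


lemma tv_bound:
  fixes w Z Zh :: "nat \<Rightarrow> real" and \<eta> :: real
  assumes m: "0 < m" and w: "\<And>i. i < m \<Longrightarrow> 0 < w i" and Z: "\<And>i. i < m \<Longrightarrow> 0 < Z i"
    and Zh: "\<And>i. i < m \<Longrightarrow> (1 - \<eta>) * Z i \<le> Zh i \<and> Zh i \<le> (1 + \<eta>) * Z i"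
    and eta: "0 < \<eta>" "\<eta> < 1"
  defines "S \<equiv> (\<Sum>j<m. w j * Z j)" and "Sh \<equiv> (\<Sum>j<m. w j * Zh j)"
  shows "(\<Sum>i<m. \<bar>w i * Zh i / Sh - w i * Z i / S\<bar>) \<le> 2 * \<eta> / (1 - \<eta>)"
proof -
  have Spos: "0 < S" unfolding S_def using m w Z
    by (intro sum_pos) (auto intro: mult_pos_pos)
  have ShS: "(1 - \<eta>) * S \<le> Sh" unfolding S_def Sh_def sum_distrib_left
  proof (intro sum_mono)
    fix j assume j: "j \<in> {..<m}"
    have "w j * ((1 - \<eta>) * Z j) \<le> w j * Zh j"
      using w Zh j by (intro mult_left_mono) (auto simp: less_imp_le)
    then show "(1 - \<eta>) * (w j * Z j) \<le> w j * Zh j" by (metis mult.left_commute)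
  qed
  have Shpos: "0 < Sh" using ShS Spos eta
    by (smt (verit) mult_pos_pos)
  have key: "\<bar>Zh i * S - Z i * Sh\<bar> \<le> 2 * \<eta> * Z i * S" if i: "i < m" for i
  proof -
    have eq: "Zh i * S - Z i * Sh = (\<Sum>j<m. w j * (Zh i * Z j - Z i * Zh j))"
      unfolding S_def Sh_def by (simp add: sum_distrib_left sum_subtractf algebra_simps)
    have "\<bar>\<Sum>j<m. w j * (Zh i * Z j - Z i * Zh j)\<bar> \<le> (\<Sum>j<m. \<bar>w j * (Zh i * Z j - Z i * Zh j)\<bar>)"
      by (rule sum_abs)
    also have "\<dots> \<le> (\<Sum>j<m. w j * (2 * \<eta> * Z i * Z j))"
    proof (rule sum_mono)
      fix j assume j: "j \<in> {..<m}"
      have wj: "0 < w j" "0 < Z j" using w Z j by auto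
      have zi: "0 < Z i" using Z i by auto
      have a: "Zh i * Z j \<le> (1 + \<eta>) * Z i * Z j" using Zh[OF i] wj by (simp add: mult_right_mono)
      have b: "(1 - \<eta>) * Z i * Z j \<le> Zh i * Z j" using Zh[OF i] wj by (simp add: mult_right_mono)
      have c: "Z i * Zh j \<le> Z i * ((1 + \<eta>) * Z j)" using Zh j zi by (simp add: mult_left_mono)
      have d: "Z i * ((1 - \<eta>) * Z j) \<le> Z i * Zh j" using Zh j zi by (simp add: mult_left_mono)
      have "\<bar>Zh i * Z j - Z i * Zh j\<bar> \<le> 2 * \<eta> * Z i * Z j"
        using a b c d by (simp add: algebra_simps abs_le_iff)
      then show "\<bar>w j * (Zh i * Z j - Z i * Zh j)\<bar> \<le> w j * (2 * \<eta> * Z i * Z j)"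
        using wj by (simp add: abs_mult mult_left_mono)
    qed
    also have "\<dots> = 2 * \<eta> * Z i * S" unfolding S_def by (simp add: sum_distrib_left algebra_simps)
    finally show ?thesis using eq by simp
  qed
  have each: "\<bar>w i * Zh i / Sh - w i * Z i / S\<bar> \<le> 2 * \<eta> / (1 - \<eta>) * (w i * Z i / S)" if i: "i < m" for i
  proof -
    have "w i * Zh i / Sh - w i * Z i / S = w i * (Zh i * S - Z i * Sh) / (Sh * S)"
      using Spos Shpos by (simp add: field_simps)
    then have "\<bar>w i * Zh i / Sh - w i * Z i / S\<bar> = w i * \<bar>Zh i * S - Z i * Sh\<bar> / (Sh * S)"
      using w[OF i] Spos Shpos by (simp add: abs_mult abs_divide)
    also have "\<dots> \<le> w i * (2 * \<eta> * Z i * S) / (Sh * S)"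
      using w[OF i] Spos Shpos key[OF i]
      by (intro divide_right_mono mult_left_mono) auto
    also have "\<dots> = 2 * \<eta> * w i * Z i / Sh" using Spos by (simp add: field_simps)
    also have "\<dots> \<le> 2 * \<eta> * w i * Z i / ((1 - \<eta>) * S)"
      using w[OF i] Z[OF i] eta Spos ShS Shpos
      by (intro divide_left_mono mult_pos_pos) auto
    also have "\<dots> = 2 * \<eta> / (1 - \<eta>) * (w i * Z i / S)" using eta by (simp add: field_simps)
    finally show ?thesis .
  qed
  have "(\<Sum>i<m. \<bar>w i * Zh i / Sh - w i * Z i / S\<bar>) \<le> (\<Sum>i<m. 2 * \<eta> / (1 - \<eta>) * (w i * Z i / S))"
    using each by (intro sum_mono) auto
  also have "\<dots> = 2 * \<eta> / (1 - \<eta>)"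
    using Spos by (simp add: sum_distrib_left[symmetric] sum_divide_distrib[symmetric] S_def)
  finally show ?thesis .
qed

lemma half_tv:
  fixes a b :: "nat \<Rightarrow> real"
  assumes "(\<Sum>i<m. a i) = 1" "(\<Sum>i<m. b i) = 1"
  shows "(\<Sum>i<m. a i - min (a i) (b i)) = (\<Sum>i<m. \<bar>a i - b i\<bar>) / 2"
proof -
  have "(\<Sum>i<m. a i - min (a i) (b i)) = (\<Sum>i<m. (\<bar>a i - b i\<bar> + (a i - b i)) / 2)"
    by (intro sum.cong) auto
  also have "\<dots> = ((\<Sum>i<m. \<bar>a i - b i\<bar>) + ((\<Sum>i<m. a i) - (\<Sum>i<m. b i))) / 2"
    by (simp only: sum_divide_distrib[symmetric] sum.distrib sum_subtractf)
  finally show ?thesis using assms by simp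
qed


lemma cost_meas: "(\<lambda>z::'a::euclidean_space \<times> 'a. ennreal ((norm (fst z - snd z))\<^sup>2)) \<in> borel_measurable borel"
proof -
  have "(\<lambda>z::'a \<times> 'a. (norm (fst z - snd z))\<^sup>2) \<in> borel_measurable borel"
    by (intro borel_measurable_continuous_onI continuous_intros)
  then show ?thesis by (rule measurable_compose) (rule measurable_ennreal)
qed

lemma tilt_props:
  fixes P :: "'a::euclidean_space measure"
  assumes P_prob: "prob_space P" and P_sets: "sets P = sets borel" and P_supp: "AE x in P. norm x \<le> C"
  shows "0 < tilt_const P v" "prob_space (exp_tilt P v)" "sets (exp_tilt P v) = sets borel"
    "AE x in exp_tilt P v. norm x \<le> C"
proof -
  interpret prob_space P by fact
  define g where "g = (\<lambda>x. exp (v \<bullet> x))"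
  have gb: "g \<in> borel_measurable borel" unfolding g_def
    by (intro borel_measurable_continuous_onI continuous_on_exp continuous_on_inner continuous_on_const continuous_on_id)
  have gm: "g \<in> borel_measurable P" unfolding measurable_cong_sets[OF P_sets refl] by (rule gb)
  have bnd: "AE x in P. exp (- (norm v * C)) \<le> g x \<and> g x \<le> exp (norm v * C)"
    using P_supp
  proof eventually_elim
    case (elim x)
    have "\<bar>v \<bullet> x\<bar> \<le> norm v * C"
      using Cauchy_Schwarz_ineq2[of v x] elim mult_left_mono[OF elim, of "norm v"] by simp
    then show ?case unfolding g_def by (simp add: abs_le_iff)
  qed
  have "AE x in P. norm (g x) \<le> exp (norm v * C)" using bnd
    by eventually_elim (simp add: g_def)
  then have gi: "integrable P g"
    by (rule integrable_const_bound[OF _ gm])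
  have "exp (- (norm v * C)) = (\<integral>x. exp (- (norm v * C)) \<partial>P)" by (simp add: prob_space)
  also have "\<dots> \<le> (\<integral>x. g x \<partial>P)"
    by (rule integral_mono_AE) (use gi bnd in auto)
  finally have "0 < (\<integral>x. g x \<partial>P)" by (smt (verit) exp_gt_zero)
  then show Zpos: "0 < tilt_const P v" unfolding tilt_const_def g_def by simp
  define f where "f = (\<lambda>x. ennreal (g x / tilt_const P v))"
  have et: "exp_tilt P v = density P f" unfolding exp_tilt_def f_def g_def by simp
  have fm: "f \<in> borel_measurable P" unfolding f_def using gm by simp
  show "sets (exp_tilt P v) = sets borel" unfolding et sets_density by (rule P_sets)
  have "emeasure (density P f) (space P) = (\<integral>\<^sup>+x. f x * indicator (space P) x \<partial>P)"
    by (rule emeasure_density[OF fm sets.top])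
  also have "\<dots> = (\<integral>\<^sup>+x. f x \<partial>P)"
    by (intro nn_integral_cong) simp
  also have "\<dots> = ennreal (\<integral>x. g x / tilt_const P v \<partial>P)"
    unfolding f_def using gi Zpos
    by (intro nn_integral_eq_integral) (auto simp: g_def)
  also have "\<dots> = 1" using Zpos unfolding tilt_const_def g_def by simp
  finally show "prob_space (exp_tilt P v)" using et by (intro prob_spaceI) simp
  show "AE x in exp_tilt P v. norm x \<le> C" unfolding et AE_density[OF fm] using P_supp
    by eventually_elim simp
qed

lemma prod_coupling:
  fixes M N :: "'a::euclidean_space measure"
  assumes M: "prob_space M" "sets M = sets borel" and N: "prob_space N" "sets N = sets borel"
  shows "M \<Otimes>\<^sub>M N \<in> couplings M N"
proof -
  interpret M: prob_space M by fact
  interpret N: prob_space N by fact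
  have spM: "space M = UNIV" using sets_eq_imp_space_eq[OF M(2)] by simp
  have spN: "space N = UNIV" using sets_eq_imp_space_eq[OF N(2)] by simp
  have s: "sets (M \<Otimes>\<^sub>M N) = sets (borel \<Otimes>\<^sub>M borel)" using M N by (simp cong: sets_pair_measure_cong)
  have fm: "fst \<in> measurable (M \<Otimes>\<^sub>M N) borel" unfolding measurable_cong_sets[OF s refl] by (rule measurable_fst)
  have sm: "snd \<in> measurable (M \<Otimes>\<^sub>M N) borel" unfolding measurable_cong_sets[OF s refl] by (rule measurable_snd)
  have d1: "distr (M \<Otimes>\<^sub>M N) borel fst = M"
  proof (rule measure_eqI)
    fix A assume A: "A \<in> sets (distr (M \<Otimes>\<^sub>M N) borel fst)"
    then have A': "A \<in> sets M" using M by simp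
    have "fst -` A \<inter> space (M \<Otimes>\<^sub>M N) = A \<times> space N" by (auto simp: space_pair_measure spM spN)
    then show "emeasure (distr (M \<Otimes>\<^sub>M N) borel fst) A = emeasure M A"
      using A A' by (simp add: emeasure_distr[OF fm] N.emeasure_pair_measure_Times N.emeasure_space_1)
  qed (use M in simp)
  have d2: "distr (M \<Otimes>\<^sub>M N) borel snd = N"
  proof (rule measure_eqI)
    fix A assume A: "A \<in> sets (distr (M \<Otimes>\<^sub>M N) borel snd)"
    then have A': "A \<in> sets N" using N by simp
    have "snd -` A \<inter> space (M \<Otimes>\<^sub>M N) = space M \<times> A" by (auto simp: space_pair_measure spM spN)
    then show "emeasure (distr (M \<Otimes>\<^sub>M N) borel snd) A = emeasure N A"
      using A A' by (simp add: emeasure_distr[OF sm] N.emeasure_pair_measure_Times M.emeasure_space_1)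
  qed (use N in simp)
  show ?thesis unfolding couplings_def
    by (intro CollectI conjI s d1 d2 prob_space_pair[OF M(1) N(1)])
qed

lemma coupling_AE:
  fixes M N :: "'a::euclidean_space measure"
  assumes mu: "\<mu> \<in> couplings M N" and M: "AE x in M. norm x \<le> C" and N: "AE x in N. norm x \<le> C"
  shows "AE z in \<mu>. norm (fst z) \<le> C \<and> norm (snd z) \<le> C"
proof -
  have s: "sets \<mu> = sets (borel \<Otimes>\<^sub>M borel)" and d: "distr \<mu> borel fst = M" "distr \<mu> borel snd = N"
    using mu by (auto simp: couplings_def)
  have fm: "fst \<in> measurable \<mu> borel" unfolding measurable_cong_sets[OF s refl] by (rule measurable_fst)
  have sm: "snd \<in> measurable \<mu> borel" unfolding measurable_cong_sets[OF s refl] by (rule measurable_snd)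
  have cl: "{x \<in> space borel. norm (x::'a) \<le> C} \<in> sets borel" by measurable
  have "AE x in distr \<mu> borel fst. norm x \<le> C" unfolding d(1) by (rule M)
  then have "AE z in \<mu>. norm (fst z) \<le> C" using AE_distr_iff[OF fm cl] by simp
  moreover have "AE x in distr \<mu> borel snd. norm x \<le> C" unfolding d(2) by (rule N)
  then have "AE z in \<mu>. norm (snd z) \<le> C" using AE_distr_iff[OF sm cl] by simp
  ultimately show ?thesis by eventually_elim auto
qed

lemma coupling_cost_bound:
  fixes M N :: "'a::euclidean_space measure"
  assumes mu: "\<mu> \<in> couplings M N" and M: "AE x in M. norm x \<le> C" and N: "AE x in N. norm x \<le> C"
  shows "(\<integral>\<^sup>+z. ennreal ((norm (fst z - snd z))\<^sup>2) \<partial>\<mu>) \<le> ennreal (4 * C\<^sup>2)"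
proof -
  interpret prob_space \<mu> using mu by (auto simp: couplings_def)
  have "(\<integral>\<^sup>+z. ennreal ((norm (fst z - snd z))\<^sup>2) \<partial>\<mu>) \<le> (\<integral>\<^sup>+z. ennreal (4 * C\<^sup>2) \<partial>\<mu>)"
  proof (rule nn_integral_mono_AE)
    show "AE z in \<mu>. ennreal ((norm (fst z - snd z))\<^sup>2) \<le> ennreal (4 * C\<^sup>2)"
      using coupling_AE[OF mu M N]
    proof eventually_elim
      case (elim z)
      have "norm (fst z - snd z) \<le> 2 * C" using norm_triangle_ineq4[of "fst z" "snd z"] elim by simp
      then have "(norm (fst z - snd z))\<^sup>2 \<le> (2 * C)\<^sup>2" by (intro power_mono) auto
      then show ?case by (simp add: power_mult_distrib)
    qed
  qed
  also have "\<dots> = ennreal (4 * C\<^sup>2)" by (simp add: emeasure_space_1)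
  finally show ?thesis .
qed


lemma near_opt:
  fixes M N :: "'a::euclidean_space measure"
  assumes mu0: "\<mu>0 \<in> couplings M N"
    and fin: "(\<integral>\<^sup>+z. ennreal ((norm (fst z - snd z))\<^sup>2) \<partial>\<mu>0) \<le> ennreal B"
    and W: "W2 M N \<le> \<epsilon>" and d: "0 < \<delta>"
  shows "\<exists>\<gamma>\<in>couplings M N. (\<integral>\<^sup>+z. ennreal ((norm (fst z - snd z))\<^sup>2) \<partial>\<gamma>) < ennreal (\<epsilon>\<^sup>2 + \<delta>)"
proof -
  define I where "I = (INF \<mu>\<in>couplings M N. \<integral>\<^sup>+z. ennreal ((norm (fst z - snd z))\<^sup>2) \<partial>\<mu>)"
  have "I \<le> (\<integral>\<^sup>+z. ennreal ((norm (fst z - snd z))\<^sup>2) \<partial>\<mu>0)"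
    unfolding I_def by (rule INF_lower[OF mu0])
  then have "I \<le> ennreal B" using fin by (rule order_trans)
  then have Ifin: "I < top" using ennreal_less_top le_less_trans by blast
  have sq: "sqrt (enn2real I) \<le> \<epsilon>" using W unfolding W2_def I_def .
  have x0: "0 \<le> enn2real I" by simp
  have s0: "0 \<le> sqrt (enn2real I)" by simp
  have "(sqrt (enn2real I))\<^sup>2 \<le> \<epsilon>\<^sup>2" using sq s0 by (rule power_mono)
  then have le: "enn2real I \<le> \<epsilon>\<^sup>2" using real_sqrt_pow2[OF x0] by simp
  have "I = ennreal (enn2real I)" using Ifin by simp
  also have "\<dots> \<le> ennreal (\<epsilon>\<^sup>2)" using le by (rule ennreal_leI)
  also have "\<dots> < ennreal (\<epsilon>\<^sup>2 + \<delta>)" using d by (simp add: ennreal_less_iff)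
  finally have "I < ennreal (\<epsilon>\<^sup>2 + \<delta>)" .
  then show ?thesis unfolding I_def by (simp add: INF_less_iff)
qed


lemma sum_K: "(\<Sum>k\<in>{..<m}\<times>{..<Suc m}. f k) = (\<Sum>i<m. (\<Sum>j<m. f (i, j)) + f (i, m))"
  by (simp add: sum.cartesian_product')

lemma ennreal_row:
  assumes "finite J" "\<And>j. j \<in> J \<Longrightarrow> 0 \<le> f j"
  shows "(\<Sum>j\<in>J. ennreal (f j) * X) = ennreal (\<Sum>j\<in>J. f j) * X"
  unfolding sum_distrib_right[symmetric] using assms by simp

lemma borel_prod_sets: "sets (borel \<Otimes>\<^sub>M borel) = sets (borel :: ('a::euclidean_space \<times> 'a) measure)"
  unfolding borel_prod ..

theorem lemmaB1:
  fixes P :: "'a::euclidean_space measure"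
    and C \<eta> \<epsilon>lin :: real and m :: nat
    and v :: "nat \<Rightarrow> 'a" and w Zhat :: "nat \<Rightarrow> real"
    and Phat :: "nat \<Rightarrow> 'a measure"
  assumes P_prob: "prob_space P" and P_sets: "sets P = sets borel"
    and P_supp: "AE x in P. norm x \<le> C"
    and m_pos: "0 < m"
    and w_pos: "\<And>i. i < m \<Longrightarrow> 0 < w i"
    and eta: "0 < \<eta>" "\<eta> < 1"
    and Zhat: "\<And>i. i < m \<Longrightarrow> (1 - \<eta>) * tilt_const P (v i) \<le> Zhat i \<and>
                               Zhat i \<le> (1 + \<eta>) * tilt_const P (v i)"
    and Phat_prob: "\<And>i. i < m \<Longrightarrow> prob_space (Phat i) \<and> sets (Phat i) = sets borel"
    and Phat_W2: "\<And>i. i < m \<Longrightarrow> W2 (Phat i) (exp_tilt P (v i)) \<le> \<epsilon>lin"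
    and Phat_supp: "\<And>i. i < m \<Longrightarrow> (AE x in Phat i. norm x \<le> C)"
  shows "W2 (mixture m (\<lambda>i. w i * Zhat i / (\<Sum>j<m. w j * Zhat j)) Phat)
            (mixture m (\<lambda>i. w i * tilt_const P (v i) / (\<Sum>j<m. w j * tilt_const P (v j)))
                       (\<lambda>i. exp_tilt P (v i)))
         \<le> \<epsilon>lin + 2 * C * sqrt (\<eta> / (1 - \<eta>))"
proof -
  interpret P: prob_space P by (rule P_prob)
  have C0: "0 \<le> C"
  proof (rule ccontr)
    assume "\<not> 0 \<le> C"
    then have F: "\<And>x. norm (x::'a) \<le> C \<Longrightarrow> False" by (smt (verit) norm_ge_zero)
    have "AE x in P. False" by (rule eventually_mono[OF P_supp F])
    then show False by simp
  qed
  define Z where "Z = (\<lambda>i. tilt_const P (v i))"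
  define T where "T = (\<lambda>i. exp_tilt P (v i))"
  have Zpos: "\<And>i. 0 < Z i" and Tprob: "\<And>i. prob_space (T i)" and Tsets: "\<And>i. sets (T i) = sets borel"
    using tilt_props[OF P_prob P_sets P_supp] by (auto simp: Z_def T_def)
  have Tsupp: "AE x in T i. norm x \<le> C" for i
    unfolding T_def by (rule tilt_props(4)[OF P_prob P_sets P_supp])
  have Phs: "\<And>i. i < m \<Longrightarrow> sets (Phat i) = sets borel" and Php: "\<And>i. i < m \<Longrightarrow> prob_space (Phat i)"
    using Phat_prob by auto
  define S where "S = (\<Sum>j<m. w j * Z j)"
  define Sh where "Sh = (\<Sum>j<m. w j * Zhat j)"
  define a where "a = (\<lambda>i. w i * Zhat i / Sh)"
  define b where "b = (\<lambda>i. w i * Z i / S)"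
  have Zh': "\<And>i. i < m \<Longrightarrow> (1 - \<eta>) * Z i \<le> Zhat i \<and> Zhat i \<le> (1 + \<eta>) * Z i"
    using Zhat by (simp add: Z_def)
  have Zhpos: "0 < Zhat i" if "i < m" for i
  proof -
    have "0 < (1 - \<eta>) * Z i" using eta Zpos[of i] by simp
    then show ?thesis using Zh'[OF that] by linarith
  qed
  have Spos: "0 < S" unfolding S_def using m_pos w_pos Zpos by (intro sum_pos) auto
  have Shpos: "0 < Sh" unfolding Sh_def using m_pos w_pos Zhpos by (intro sum_pos) auto
  have a0: "0 \<le> a i" if "i < m" for i unfolding a_def using w_pos[OF that] Zhpos[OF that] Shpos by simp
  have b0: "0 \<le> b i" if "i < m" for i unfolding b_def using w_pos[OF that] Zpos[of i] Spos by simp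
  have asum: "(\<Sum>i<m. a i) = 1" unfolding a_def sum_divide_distrib[symmetric] using Shpos by (simp add: Sh_def)
  have bsum: "(\<Sum>i<m. b i) = 1" unfolding b_def sum_divide_distrib[symmetric] using Spos by (simp add: S_def)
  have tv: "(\<Sum>i<m. \<bar>a i - b i\<bar>) \<le> 2 * \<eta> / (1 - \<eta>)"
    unfolding a_def b_def S_def Sh_def by (rule tv_bound) (use m_pos w_pos Zpos Zh' eta in auto)
  define t where "t = (\<lambda>i. min (a i) (b i))"
  define \<alpha> where "\<alpha> = (\<lambda>i. a i - t i)"
  define \<beta> where "\<beta> = (\<lambda>i. b i - t i)"
  define s where "s = (\<Sum>i<m. t i)"
  define \<tau> where "\<tau> = \<eta> / (1 - \<eta>)"
  have \<alpha>sum: "(\<Sum>i<m. \<alpha> i) = 1 - s" unfolding \<alpha>_def s_def using asum by (simp add: sum_subtractf)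
  have \<beta>sum: "(\<Sum>i<m. \<beta> i) = 1 - s" unfolding \<beta>_def s_def using bsum by (simp add: sum_subtractf)
  have \<alpha>0: "0 \<le> \<alpha> i" for i unfolding \<alpha>_def t_def by simp
  have \<beta>0: "0 \<le> \<beta> i" for i unfolding \<beta>_def t_def by simp
  have t0: "0 \<le> t i" if "i < m" for i unfolding t_def using a0[OF that] b0[OF that] by simp
  have tau: "1 - s \<le> \<tau>"
  proof -
    have "1 - s = (\<Sum>i<m. \<bar>a i - b i\<bar>) / 2"
      using half_tv[OF asum bsum] \<alpha>sum unfolding \<alpha>_def t_def by simp
    also have "\<dots> \<le> \<tau>"
    proof -
      have "2 * \<eta> / (1 - \<eta>) = 2 * \<tau>" unfolding \<tau>_def by simp
      then show ?thesis using tv by linarith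
    qed
    finally show ?thesis .
  qed
  have s1: "s \<le> 1" using \<beta>sum sum_nonneg[of "{..<m}" \<beta>] \<beta>0 by simp
  have \<tau>0: "0 \<le> \<tau>" unfolding \<tau>_def using eta by simp
  have \<alpha>z: "\<alpha> i = 0" if "s = 1" "i < m" for i
    using \<alpha>sum that sum_nonneg_eq_0_iff[of "{..<m}" \<alpha>] \<alpha>0 by simp
  have \<beta>z: "\<beta> i = 0" if "s = 1" "i < m" for i
    using \<beta>sum that sum_nonneg_eq_0_iff[of "{..<m}" \<beta>] \<beta>0 by simp
  have rowsum: "\<alpha> i * (\<Sum>j<m. \<beta> j) / (1 - s) = \<alpha> i" if "i < m" for i
    using \<beta>sum \<alpha>z[OF _ that] by (cases "s = 1") auto
  have colsum: "(\<Sum>i<m. \<alpha> i) * \<beta> j / (1 - s) = \<beta> j" if "j < m" for j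
    using \<alpha>sum \<beta>z[OF _ that] by (cases "s = 1") auto
  have totsum: "(\<Sum>i<m. \<alpha> i) * (\<Sum>j<m. \<beta> j) / (1 - s) = 1 - s"
    using \<alpha>sum \<beta>sum by (cases "s = 1") auto
  have e0: "0 \<le> \<epsilon>lin"
  proof -
    have "0 \<le> W2 (Phat 0) (exp_tilt P (v 0))" unfolding W2_def by simp
    then show ?thesis using Phat_W2[OF m_pos] by linarith
  qed
  have pc: "Phat i \<Otimes>\<^sub>M T j \<in> couplings (Phat i) (T j)" if "i < m" for i j
    by (rule prod_coupling) (use Php[OF that] Phs[OF that] Tprob Tsets in auto)
  have pcost: "(\<integral>\<^sup>+z. ennreal ((norm (fst z - snd z))\<^sup>2) \<partial>(Phat i \<Otimes>\<^sub>M T j)) \<le> ennreal (4 * C\<^sup>2)"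
    if "i < m" for i j
    by (rule coupling_cost_bound[OF pc[OF that] Phat_supp[OF that] Tsupp])
  have main: "(INF \<mu>\<in>couplings (mix {..<m} a Phat) (mix {..<m} b T).
                 \<integral>\<^sup>+z. ennreal ((norm (fst z - snd z))\<^sup>2) \<partial>\<mu>)
              \<le> ennreal (\<epsilon>lin\<^sup>2 + 4 * C\<^sup>2 * \<tau> + \<delta>)" if d: "0 < \<delta>" for \<delta>
  proof -
    have "\<forall>i. \<exists>g. i < m \<longrightarrow> g \<in> couplings (Phat i) (T i) \<and>
            (\<integral>\<^sup>+z. ennreal ((norm (fst z - snd z))\<^sup>2) \<partial>g) < ennreal (\<epsilon>lin\<^sup>2 + \<delta>)"
    proof
      fix i show "\<exists>g. i < m \<longrightarrow> g \<in> couplings (Phat i) (T i) \<and>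
            (\<integral>\<^sup>+z. ennreal ((norm (fst z - snd z))\<^sup>2) \<partial>g) < ennreal (\<epsilon>lin\<^sup>2 + \<delta>)"
      proof (cases "i < m")
        case True
        have W: "W2 (Phat i) (T i) \<le> \<epsilon>lin" using Phat_W2[OF True] by (simp add: T_def)
        from near_opt[OF pc[OF True] pcost[OF True] W d] show ?thesis by blast
      qed blast
    qed
    from choice[OF this] obtain \<gamma> where "\<forall>i. i < m \<longrightarrow> \<gamma> i \<in> couplings (Phat i) (T i) \<and>
            (\<integral>\<^sup>+z. ennreal ((norm (fst z - snd z))\<^sup>2) \<partial>\<gamma> i) < ennreal (\<epsilon>lin\<^sup>2 + \<delta>)" by blast
    then have \<gamma>c: "\<And>i. i < m \<Longrightarrow> \<gamma> i \<in> couplings (Phat i) (T i)"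
      and \<gamma>cost: "\<And>i. i < m \<Longrightarrow> (\<integral>\<^sup>+z. ennreal ((norm (fst z - snd z))\<^sup>2) \<partial>\<gamma> i) < ennreal (\<epsilon>lin\<^sup>2 + \<delta>)"
      by auto
    define K where "K = {..<m} \<times> {..<Suc m}"
    define G where "G = (\<lambda>(i, j). if j = m then \<gamma> i else Phat i \<Otimes>\<^sub>M T j)"
    define pp where "pp = (\<lambda>(i, j). if j = m then t i else \<alpha> i * \<beta> j / (1 - s))"
    define c where "c = (\<lambda>(i::nat, j). if j = m then \<epsilon>lin\<^sup>2 + \<delta> else 4 * C\<^sup>2)"
    define \<mu> where "\<mu> = mix K pp G"
    have Kfin: "finite K" unfolding K_def by simp
    have Gc: "G k \<in> couplings (Phat (fst k)) (T (if snd k = m then fst k else snd k))" if k: "k \<in> K" for k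
    proof -
      obtain i j where ij: "k = (i, j)" by (cases k)
      have i: "i < m" using k ij by (simp add: K_def)
      show ?thesis
      proof (cases "j = m")
        case True then show ?thesis using \<gamma>c[OF i] ij by (simp add: G_def)
      next
        case False then show ?thesis using pc[OF i] ij by (simp add: G_def)
      qed
    qed
    have Gsets: "sets (G k) = sets borel" if "k \<in> K" for k
      using Gc[OF that] borel_prod_sets by (simp add: couplings_def)
    have Gprob: "prob_space (G k) \<and> sets (G k) = sets borel" if "k \<in> K" for k
      using Gc[OF that] Gsets[OF that] by (simp add: couplings_def)
    have pp0: "0 \<le> pp k" if k: "k \<in> K" for k
    proof -
      obtain i j where ij: "k = (i, j)" by (cases k)
      have i: "i < m" using k ij by (simp add: K_def)
      show ?thesis using ij t0[OF i] \<alpha>0 \<beta>0 s1 by (simp add: pp_def)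
    qed
    have ppm: "pp (i, m) = t i" for i by (simp add: pp_def)
    have ppj: "pp (i, j) = \<alpha> i * \<beta> j / (1 - s)" if "j < m" for i j using that by (simp add: pp_def)
    have cm: "c (i, m) = \<epsilon>lin\<^sup>2 + \<delta>" for i by (simp add: c_def)
    have cj: "c (i, j) = 4 * C\<^sup>2" if "j < m" for i j using that by (simp add: c_def)
    have rows: "(\<Sum>j<m. pp (i, j)) + pp (i, m) = a i" if i: "i < m" for i
    proof -
      have "(\<Sum>j<m. pp (i, j)) = (\<Sum>j<m. \<alpha> i * \<beta> j / (1 - s))" by (intro sum.cong refl) (simp add: ppj)
      also have "\<dots> = \<alpha> i * (\<Sum>j<m. \<beta> j) / (1 - s)" by (simp add: sum_distrib_left sum_divide_distrib)
      also have "\<dots> = \<alpha> i" by (rule rowsum[OF i])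
      finally show ?thesis by (simp add: ppm \<alpha>_def)
    qed
    have cols: "(\<Sum>i<m. pp (i, j)) = \<beta> j" if j: "j < m" for j
    proof -
      have "(\<Sum>i<m. pp (i, j)) = (\<Sum>i<m. \<alpha> i * \<beta> j / (1 - s))" by (intro sum.cong refl) (simp add: ppj j)
      also have "\<dots> = (\<Sum>i<m. \<alpha> i) * \<beta> j / (1 - s)" by (simp add: sum_distrib_right sum_divide_distrib)
      also have "\<dots> = \<beta> j" by (rule colsum[OF j])
      finally show ?thesis .
    qed
    have ppsum: "(\<Sum>k\<in>K. pp k) = 1"
      unfolding K_def sum_K using rows asum by simp
    have fst_meas: "fst \<in> borel_measurable (borel :: ('a \<times> 'a) measure)"
      by (intro borel_measurable_continuous_onI continuous_on_fst continuous_on_id)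
    have snd_meas: "snd \<in> borel_measurable (borel :: ('a \<times> 'a) measure)"
      by (intro borel_measurable_continuous_onI continuous_on_snd continuous_on_id)
    have \<mu>sets: "sets \<mu> = sets (borel \<Otimes>\<^sub>M borel)" unfolding \<mu>_def sets_mix by (rule borel_prod_sets[symmetric])
    have \<mu>prob: "prob_space \<mu>" unfolding \<mu>_def
      by (rule prob_space_mix[OF Kfin Gprob pp0 ppsum])
    have m1: "distr \<mu> borel fst = mix {..<m} a Phat"
    proof -
      have "distr \<mu> borel fst = mix K pp (\<lambda>k. distr (G k) borel fst)"
        unfolding \<mu>_def by (rule distr_mix[OF Kfin Gsets fst_meas])
      also have "\<dots> = mix {..<m} a Phat"
      proof (rule measure_eqI)
        fix A assume "A \<in> sets (mix K pp (\<lambda>k. distr (G k) borel fst))"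
        then have A: "A \<in> sets borel" by simp
        have "emeasure (mix K pp (\<lambda>k. distr (G k) borel fst)) A
              = (\<Sum>k\<in>K. ennreal (pp k) * emeasure (distr (G k) borel fst) A)"
          by (rule emeasure_mix[OF Kfin _ A]) simp
        also have "\<dots> = (\<Sum>k\<in>K. ennreal (pp k) * emeasure (Phat (fst k)) A)"
          by (intro sum.cong refl) (use Gc in \<open>simp add: couplings_def\<close>)
        also have "\<dots> = (\<Sum>i<m. (\<Sum>j<m. ennreal (pp (i, j)) * emeasure (Phat i) A) + ennreal (pp (i, m)) * emeasure (Phat i) A)"
          unfolding K_def sum_K by simp
        also have "\<dots> = (\<Sum>i<m. ennreal (a i) * emeasure (Phat i) A)"
        proof (intro sum.cong refl)
          fix i assume "i \<in> {..<m}"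
          then have i: "i < m" by simp
          have nn: "\<And>j. j \<in> {..<m} \<Longrightarrow> 0 \<le> pp (i, j)" using pp0 i by (auto simp: K_def)
          have nm: "0 \<le> pp (i, m)" using pp0 i by (auto simp: K_def)
          have "(\<Sum>j<m. ennreal (pp (i, j)) * emeasure (Phat i) A) + ennreal (pp (i, m)) * emeasure (Phat i) A
                = (ennreal (\<Sum>j<m. pp (i, j)) + ennreal (pp (i, m))) * emeasure (Phat i) A"
            by (simp only: ennreal_row[OF _ nn] finite_lessThan distrib_right)
          also have "\<dots> = ennreal (a i) * emeasure (Phat i) A"
          proof -
            have "0 \<le> (\<Sum>j<m. pp (i, j))" using nn by (intro sum_nonneg) auto
            then have "ennreal (\<Sum>j<m. pp (i, j)) + ennreal (pp (i, m)) = ennreal ((\<Sum>j<m. pp (i, j)) + pp (i, m))"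
              using nm by (rule ennreal_plus[symmetric])
            then show ?thesis using rows[OF i] by simp
          qed
          finally show "(\<Sum>j<m. ennreal (pp (i, j)) * emeasure (Phat i) A) + ennreal (pp (i, m)) * emeasure (Phat i) A
                = ennreal (a i) * emeasure (Phat i) A" .
        qed
        also have "\<dots> = emeasure (mix {..<m} a Phat) A"
          by (rule emeasure_mix[symmetric]) (use Phs A in auto)
        finally show "emeasure (mix K pp (\<lambda>k. distr (G k) borel fst)) A = emeasure (mix {..<m} a Phat) A" .
      qed simp
      finally show ?thesis .
    qed
    have m2: "distr \<mu> borel snd = mix {..<m} b T"
    proof -
      have "distr \<mu> borel snd = mix K pp (\<lambda>k. distr (G k) borel snd)"
        unfolding \<mu>_def by (rule distr_mix[OF Kfin Gsets snd_meas])
      also have "\<dots> = mix {..<m} b T"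
      proof (rule measure_eqI)
        fix A assume "A \<in> sets (mix K pp (\<lambda>k. distr (G k) borel snd))"
        then have A: "A \<in> sets borel" by simp
        have "emeasure (mix K pp (\<lambda>k. distr (G k) borel snd)) A
              = (\<Sum>k\<in>K. ennreal (pp k) * emeasure (distr (G k) borel snd) A)"
          by (rule emeasure_mix[OF Kfin _ A]) simp
        also have "\<dots> = (\<Sum>k\<in>K. ennreal (pp k) * emeasure (T (if snd k = m then fst k else snd k)) A)"
          by (intro sum.cong refl) (use Gc in \<open>simp add: couplings_def\<close>)
        also have "\<dots> = (\<Sum>i<m. (\<Sum>j<m. ennreal (pp (i, j)) * emeasure (T (if j = m then i else j)) A) + ennreal (pp (i, m)) * emeasure (T i) A)"
          unfolding K_def sum_K by simp
        also have "\<dots> = (\<Sum>i<m. (\<Sum>j<m. ennreal (pp (i, j)) * emeasure (T j) A) + ennreal (t i) * emeasure (T i) A)"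
          by (intro sum.cong refl arg_cong2[where f="(+)"]) (auto simp: ppm)
        also have "\<dots> = (\<Sum>j<m. \<Sum>i<m. ennreal (pp (i, j)) * emeasure (T j) A) + (\<Sum>i<m. ennreal (t i) * emeasure (T i) A)"
          by (simp only: sum.distrib sum.swap[of "\<lambda>i j. ennreal (pp (i, j)) * emeasure (T j) A" "{..<m}" "{..<m}"])
        also have "\<dots> = (\<Sum>j<m. ennreal (\<beta> j) * emeasure (T j) A) + (\<Sum>i<m. ennreal (t i) * emeasure (T i) A)"
        proof (intro arg_cong2[where f="(+)"] sum.cong refl)
          fix j assume "j \<in> {..<m}"
          then have j: "j < m" by simp
          have nn: "\<And>i. i \<in> {..<m} \<Longrightarrow> 0 \<le> pp (i, j)" using pp0 j by (auto simp: K_def)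
          show "(\<Sum>i<m. ennreal (pp (i, j)) * emeasure (T j) A) = ennreal (\<beta> j) * emeasure (T j) A"
            by (simp only: ennreal_row[OF _ nn] finite_lessThan cols[OF j])
        qed
        also have "\<dots> = (\<Sum>j<m. ennreal (b j) * emeasure (T j) A)"
          unfolding sum.distrib[symmetric]
        proof (intro sum.cong refl)
          fix j assume "j \<in> {..<m}"
          then have j: "j < m" by simp
          show "ennreal (\<beta> j) * emeasure (T j) A + ennreal (t j) * emeasure (T j) A = ennreal (b j) * emeasure (T j) A"
          proof -
            have "ennreal (\<beta> j) + ennreal (t j) = ennreal (\<beta> j + t j)"
              using \<beta>0[of j] t0[OF j] by (rule ennreal_plus[symmetric])
            then show ?thesis by (simp add: \<beta>_def distrib_right[symmetric])
          qed
        qed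
        also have "\<dots> = emeasure (mix {..<m} b T) A"
          by (rule emeasure_mix[symmetric]) (use Tsets A in auto)
        finally show "emeasure (mix K pp (\<lambda>k. distr (G k) borel snd)) A = emeasure (mix {..<m} b T) A" .
      qed simp
      finally show ?thesis .
    qed
    have \<mu>c: "\<mu> \<in> couplings (mix {..<m} a Phat) (mix {..<m} b T)"
      unfolding couplings_def by (intro CollectI conjI \<mu>sets \<mu>prob m1 m2)
    have c0: "0 \<le> c k" for k using d by (auto simp: c_def split: prod.splits)
    have "(\<integral>\<^sup>+z. ennreal ((norm (fst z - snd z))\<^sup>2) \<partial>\<mu>)
          = (\<Sum>k\<in>K. ennreal (pp k) * (\<integral>\<^sup>+z. ennreal ((norm (fst z - snd z))\<^sup>2) \<partial>G k))"
      unfolding \<mu>_def by (rule nn_integral_mix[OF Kfin Gsets cost_meas])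
    also have "\<dots> \<le> (\<Sum>k\<in>K. ennreal (pp k * c k))"
    proof (rule sum_mono)
      fix k assume k: "k \<in> K"
      obtain i j where ij: "k = (i, j)" by (cases k)
      have i: "i < m" and j: "j < Suc m" using k ij by (auto simp: K_def)
      have "(\<integral>\<^sup>+z. ennreal ((norm (fst z - snd z))\<^sup>2) \<partial>G k) \<le> ennreal (c k)"
      proof (cases "j = m")
        case True
        then show ?thesis using \<gamma>cost[OF i] ij by (simp add: G_def c_def)
      next
        case False
        then show ?thesis using pcost[OF i, of j] ij by (simp add: G_def c_def)
      qed
      then have "ennreal (pp k) * (\<integral>\<^sup>+z. ennreal ((norm (fst z - snd z))\<^sup>2) \<partial>G k) \<le> ennreal (pp k) * ennreal (c k)"
        by (rule mult_left_mono) simp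
      then show "ennreal (pp k) * (\<integral>\<^sup>+z. ennreal ((norm (fst z - snd z))\<^sup>2) \<partial>G k) \<le> ennreal (pp k * c k)"
        using pp0[OF k] c0[of k] by (simp add: ennreal_mult)
    qed
    also have "\<dots> = ennreal (\<Sum>k\<in>K. pp k * c k)"
      using pp0 c0 by (simp add: sum_nonneg)
    also have "\<dots> \<le> ennreal (\<epsilon>lin\<^sup>2 + 4 * C\<^sup>2 * \<tau> + \<delta>)"
    proof (rule ennreal_leI)
      have "(\<Sum>k\<in>K. pp k * c k) = (\<Sum>i<m. (\<Sum>j<m. \<alpha> i * \<beta> j / (1 - s) * (4 * C\<^sup>2)) + t i * (\<epsilon>lin\<^sup>2 + \<delta>))"
        unfolding K_def sum_K by (intro sum.cong refl arg_cong2[where f="(+)"]) (auto simp: ppj ppm cj cm)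
      also have "\<dots> = (\<Sum>i<m. \<Sum>j<m. \<alpha> i * \<beta> j) / (1 - s) * (4 * C\<^sup>2) + s * (\<epsilon>lin\<^sup>2 + \<delta>)"
        by (simp add: sum.distrib s_def sum_distrib_right sum_divide_distrib)
      also have "\<dots> = (1 - s) * (4 * C\<^sup>2) + s * (\<epsilon>lin\<^sup>2 + \<delta>)"
        using totsum by (simp add: sum_product)
      also have "\<dots> \<le> \<tau> * (4 * C\<^sup>2) + 1 * (\<epsilon>lin\<^sup>2 + \<delta>)"
      proof (intro add_mono mult_right_mono)
        show "1 - s \<le> \<tau>" by (rule tau)
        show "s \<le> 1" by (rule s1)
      qed (use d in auto)
      finally show "(\<Sum>k\<in>K. pp k * c k) \<le> \<epsilon>lin\<^sup>2 + 4 * C\<^sup>2 * \<tau> + \<delta>" by (simp add: algebra_simps)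
    qed
    finally have cost\<mu>: "(\<integral>\<^sup>+z. ennreal ((norm (fst z - snd z))\<^sup>2) \<partial>\<mu>) \<le> ennreal (\<epsilon>lin\<^sup>2 + 4 * C\<^sup>2 * \<tau> + \<delta>)" .
    have "(INF \<nu>\<in>couplings (mix {..<m} a Phat) (mix {..<m} b T).
                 \<integral>\<^sup>+z. ennreal ((norm (fst z - snd z))\<^sup>2) \<partial>\<nu>)
          \<le> (\<integral>\<^sup>+z. ennreal ((norm (fst z - snd z))\<^sup>2) \<partial>\<mu>)" by (rule INF_lower[OF \<mu>c])
    then show ?thesis using cost\<mu> by (rule order_trans)
  qed
  have inf_le: "(INF \<mu>\<in>couplings (mix {..<m} a Phat) (mix {..<m} b T).
                 \<integral>\<^sup>+z. ennreal ((norm (fst z - snd z))\<^sup>2) \<partial>\<mu>)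
              \<le> ennreal (\<epsilon>lin\<^sup>2 + 4 * C\<^sup>2 * \<tau>)" (is "?I \<le> _")
  proof (rule ennreal_le_epsilon)
    fix e :: real assume "0 < e"
    then have "?I \<le> ennreal (\<epsilon>lin\<^sup>2 + 4 * C\<^sup>2 * \<tau> + e)" by (rule main)
    also have "\<dots> = ennreal (\<epsilon>lin\<^sup>2 + 4 * C\<^sup>2 * \<tau>) + ennreal e"
      using \<open>0 < e\<close> \<tau>0 by (intro ennreal_plus) auto
    finally show "?I \<le> ennreal (\<epsilon>lin\<^sup>2 + 4 * C\<^sup>2 * \<tau>) + ennreal e" .
  qed
  have "W2 (mix {..<m} a Phat) (mix {..<m} b T) = sqrt (enn2real ?I)" unfolding W2_def ..
  also have "\<dots> \<le> sqrt (\<epsilon>lin\<^sup>2 + 4 * C\<^sup>2 * \<tau>)"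
  proof (rule real_sqrt_le_mono)
    have nn: "0 \<le> \<epsilon>lin\<^sup>2 + 4 * C\<^sup>2 * \<tau>" using \<tau>0 by simp
    have "enn2real ?I \<le> enn2real (ennreal (\<epsilon>lin\<^sup>2 + 4 * C\<^sup>2 * \<tau>))"
      by (rule enn2real_mono[OF inf_le]) simp
    then show "enn2real ?I \<le> \<epsilon>lin\<^sup>2 + 4 * C\<^sup>2 * \<tau>" unfolding enn2real_ennreal[OF nn] .
  qed
  also have "\<dots> \<le> sqrt ((\<epsilon>lin + 2 * C * sqrt \<tau>)\<^sup>2)"
  proof (rule real_sqrt_le_mono)
    have "(\<epsilon>lin + 2 * C * sqrt \<tau>)\<^sup>2 = \<epsilon>lin\<^sup>2 + 4 * C\<^sup>2 * (sqrt \<tau>)\<^sup>2 + 4 * \<epsilon>lin * C * sqrt \<tau>"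
      by (simp add: power2_eq_square algebra_simps)
    moreover have "0 \<le> 4 * \<epsilon>lin * C * sqrt \<tau>" using e0 C0 \<tau>0 by simp
    ultimately show "\<epsilon>lin\<^sup>2 + 4 * C\<^sup>2 * \<tau> \<le> (\<epsilon>lin + 2 * C * sqrt \<tau>)\<^sup>2" using \<tau>0 by simp
  qed
  also have "\<dots> = \<epsilon>lin + 2 * C * sqrt \<tau>" using e0 C0 \<tau>0 by simp
  finally have fin: "W2 (mix {..<m} a Phat) (mix {..<m} b T) \<le> \<epsilon>lin + 2 * C * sqrt \<tau>" .
  show ?thesis using fin unfolding mixture_mix a_def b_def T_def Z_def S_def Sh_def \<tau>_def .
qed

end
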